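(* For every positive integer $n$, as formal power series in $z$, \[ \sum_{k \geq 0} \overline{{ n+k-1 \brack k}}_{q,t} z^k q^k = \sum_{k \geq 0} \frac{z^k q^{k^2+k} (-t zq^2;q)_{k}}{(zq;q)_{k+1}} \left( \overline{{ n-1 \brack k}}_{q,t} +t z q^{2k+2} \overline{{ n-2 \brack k}}_{q,t} \right). \]
   Context: An overpartition is a partition in which the last occurrence of each distinct part size may be overlined; its weight $|\lambda|$ is the sum of its parts. For integers $a,b$ with $0\le b\le a$, $\overline{{a \brack b}}_{q,t}=\sum_{\lambda} t^{\#_o(\lambda)} q^{|\lambda|}$, the sum over all overpartitions $\lambda$ with largest part at most $a-b$ and at most $b$ parts, $\#_o(\lambda)$ being the number of overlined parts; for all other integer pairs $(a,b)$ it is $0$. Notation: $(x;q)_k=\prod_{j=1}^{k}(1-xq^{j-1})$, $(x;q)_0=1$. *)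

theory Defs
  imports "HOL-Computational_Algebra.Formal_Power_Series" "HOL-Library.Multiset"
begin

text \<open>An overpartition is encoded as a pair (M, S): M is the multiset of parts
(positive integers), S is the set of part sizes whose last occurrence is overlined
(S a subset of the distinct parts).\<close>

definition overpartitions_bounded :: "nat \<Rightarrow> nat \<Rightarrow> (nat multiset \<times> nat set) set" where
  "overpartitions_bounded m b =
     {(M, S). set_mset M \<subseteq> {1..m} \<and> size M \<le> b \<and> S \<subseteq> set_mset M}"

definition ovgauss :: "'a::comm_ring_1 \<Rightarrow> 'a \<Rightarrow> int \<Rightarrow> int \<Rightarrow> 'a" where
  "ovgauss q t a b =
     (if 0 \<le> b \<and> b \<le> a then
        (\<Sum>(M, S)\<in>overpartitions_bounded (nat (a - b)) (nat b). t ^ card S * q ^ sum_mset M)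
      else 0)"

definition qpoch :: "'a::comm_ring_1 \<Rightarrow> 'a \<Rightarrow> nat \<Rightarrow> 'a" where
  "qpoch x q k = (\<Prod>j<k. (1 - x * q ^ j))"

end

theory Submission
  imports Defs
begin

definition wt :: "'a::comm_ring_1 \<Rightarrow> 'a \<Rightarrow> nat multiset \<times> nat set \<Rightarrow> 'a" where
  "wt q t p = t ^ card (snd p) * q ^ sum_mset (fst p)"

definition Hn :: "'a::comm_ring_1 \<Rightarrow> 'a \<Rightarrow> nat \<Rightarrow> nat \<Rightarrow> 'a" where
  "Hn q t r k = (\<Sum>p\<in>overpartitions_bounded r k. wt q t p)"

lemma OB_finite: "finite (overpartitions_bounded r k)"
proof -
  have "{M. set_mset M \<subseteq> {1..r} \<and> size M \<le> k} = (\<Union>n\<in>{..k}. multisets_of_size {1..r} n)"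
    by (auto simp: multisets_of_size_def)
  hence f: "finite {M. set_mset M \<subseteq> {1..r} \<and> size M \<le> k}" by auto
  have "overpartitions_bounded r k \<subseteq> {M. set_mset M \<subseteq> {1..r} \<and> size M \<le> k} \<times> Pow {1..r}"
    by (auto simp: overpartitions_bounded_def)
  thus ?thesis using f by (meson finite_Pow_iff finite_SigmaI finite_atLeastAtMost finite_subset)
qed

lemma Hn_0k: "Hn q t 0 k = 1"
proof -
  have "overpartitions_bounded 0 k = {({#}, {})}"
    by (auto simp: overpartitions_bounded_def)
  thus ?thesis by (simp add: Hn_def wt_def)
qed

lemma Hn_r0: "Hn q t r 0 = 1"
proof -
  have "overpartitions_bounded r 0 = {({#}, {})}"
    by (auto simp: overpartitions_bounded_def)
  thus ?thesis by (simp add: Hn_def wt_def)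
qed

lemma Hn_rec1:
  "Hn q t (Suc r) (Suc k) = Hn q t r (Suc k) + q ^ Suc r * (Hn q t (Suc r) k + t * Hn q t r k)"
proof -
  define R where "R = Suc r"
  define P0 where "P0 K = {p\<in>overpartitions_bounded R K. R \<notin># fst p}" for K
  define P1 where "P1 K = {p\<in>overpartitions_bounded R K. R \<in># fst p \<and> R \<notin> snd p}" for K
  define P2 where "P2 K = {p\<in>overpartitions_bounded R K. R \<in> snd p}" for K
  have fin: "finite (P0 K)" "finite (P1 K)" "finite (P2 K)" for K
    using OB_finite[of R K] by (auto simp: P0_def P1_def P2_def)
  have split: "overpartitions_bounded R K = P0 K \<union> P1 K \<union> P2 K" for K
    by (auto simp: P0_def P1_def P2_def overpartitions_bounded_def)
  have T: "Hn q t R K = sum (wt q t) (P0 K) + sum (wt q t) (P1 K) + sum (wt q t) (P2 K)" for K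
  proof -
    have "Hn q t R K = sum (wt q t) (P0 K \<union> P1 K \<union> P2 K)" by (simp add: Hn_def split)
    also have "\<dots> = sum (wt q t) (P0 K \<union> P1 K) + sum (wt q t) (P2 K)"
      by (rule sum.union_disjoint) (use fin in \<open>auto simp: P0_def P1_def P2_def overpartitions_bounded_def\<close>)
    also have "sum (wt q t) (P0 K \<union> P1 K) = sum (wt q t) (P0 K) + sum (wt q t) (P1 K)"
      by (rule sum.union_disjoint) (use fin in \<open>auto simp: P0_def P1_def\<close>)
    finally show ?thesis .
  qed
  have E0: "P0 K = overpartitions_bounded r K" for K
    by (auto simp: P0_def overpartitions_bounded_def R_def) (metis atLeastAtMost_iff le_Suc_eq subset_iff)+
  have E2: "sum (wt q t) (P2 K) = t * sum (wt q t) (P1 K)" for K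
  proof -
    have "sum (wt q t) (P2 K) = sum (\<lambda>p. t * wt q t p) (P1 K)"
    proof (rule sum.reindex_bij_witness[of _ "\<lambda>(M,S). (M, insert R S)" "\<lambda>(M,S). (M, S - {R})"])
      show "\<And>a. a \<in> P2 K \<Longrightarrow> (case case a of (M, S) \<Rightarrow> (M, S - {R}) of (M, S) \<Rightarrow> (M, insert R S)) = a"
        by (auto simp: P2_def)
      show "\<And>a. a \<in> P2 K \<Longrightarrow> (case a of (M, S) \<Rightarrow> (M, S - {R})) \<in> P1 K"
        by (auto simp: P1_def P2_def overpartitions_bounded_def)
      show "\<And>b. b \<in> P1 K \<Longrightarrow> (case case b of (M, S) \<Rightarrow> (M, insert R S) of (M, S) \<Rightarrow> (M, S - {R})) = b"
        by (auto simp: P1_def)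
      show "\<And>b. b \<in> P1 K \<Longrightarrow> (case b of (M, S) \<Rightarrow> (M, insert R S)) \<in> P2 K"
        by (auto simp: P1_def P2_def overpartitions_bounded_def)
      show "\<And>a. a \<in> P2 K \<Longrightarrow> t * wt q t (case a of (M, S) \<Rightarrow> (M, S - {R})) = wt q t a"
      proof -
        fix a assume a: "a \<in> P2 K"
        obtain M S where [simp]: "a = (M,S)" by (cases a)
        have "finite S" using a by (auto simp: P2_def overpartitions_bounded_def intro: finite_subset)
        moreover have "R \<in> S" using a by (auto simp: P2_def)
        ultimately have "card S = Suc (card (S - {R}))" by (metis card_Suc_Diff1)
        thus "t * wt q t (case a of (M, S) \<Rightarrow> (M, S - {R})) = wt q t a" by (simp add: wt_def)
      qed
    qed
    thus ?thesis by (simp add: sum_distrib_left)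
  qed
  have E1: "sum (wt q t) (P1 (Suc K)) = q ^ R * (sum (wt q t) (P0 K) + sum (wt q t) (P1 K))" for K
  proof -
    have "sum (wt q t) (P1 (Suc K)) = sum (\<lambda>p. q ^ R * wt q t p) (P0 K \<union> P1 K)"
    proof (rule sum.reindex_bij_witness[of _ "\<lambda>(M,S). (add_mset R M, S)" "\<lambda>(M,S). (M - {#R#}, S)"])
      show "\<And>a. a \<in> P1 (Suc K) \<Longrightarrow> (case case a of (M, S) \<Rightarrow> (M - {#R#}, S) of (M, S) \<Rightarrow> (add_mset R M, S)) = a"
        by (auto simp: P1_def)
      show "\<And>a. a \<in> P1 (Suc K) \<Longrightarrow> (case a of (M, S) \<Rightarrow> (M - {#R#}, S)) \<in> P0 K \<union> P1 K"
      proof -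
        fix a assume a: "a \<in> P1 (Suc K)"
        obtain M S where [simp]: "a = (M,S)" by (cases a)
        have RM: "R \<in># M" and RS: "R \<notin> S" and sM: "set_mset M \<subseteq> {1..R}" and sz: "size M \<le> Suc K"
          and SM: "S \<subseteq> set_mset M"
          using a by (auto simp: P1_def overpartitions_bounded_def)
        have "size (M - {#R#}) \<le> K" using RM sz by (simp add: size_Diff_singleton)
        moreover have "set_mset (M - {#R#}) \<subseteq> {1..R}" using sM by (meson in_diffD subset_iff)
        moreover have "S \<subseteq> set_mset (M - {#R#})"
        proof
          fix x assume "x \<in> S"
          with SM RS have "x \<in># M" "x \<noteq> R" by auto
          thus "x \<in># M - {#R#}" by (simp add: in_diff_count)
        qed
        ultimately show "(case a of (M, S) \<Rightarrow> (M - {#R#}, S)) \<in> P0 K \<union> P1 K"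
          using RS by (auto simp: P0_def P1_def overpartitions_bounded_def)
      qed
      show "\<And>b. b \<in> P0 K \<union> P1 K \<Longrightarrow> (case case b of (M, S) \<Rightarrow> (add_mset R M, S) of (M, S) \<Rightarrow> (M - {#R#}, S)) = b"
        by auto
      show "\<And>b. b \<in> P0 K \<union> P1 K \<Longrightarrow> (case b of (M, S) \<Rightarrow> (add_mset R M, S)) \<in> P1 (Suc K)"
        by (auto simp: P0_def P1_def overpartitions_bounded_def R_def)
      show "\<And>a. a \<in> P1 (Suc K) \<Longrightarrow> q ^ R * wt q t (case a of (M, S) \<Rightarrow> (M - {#R#}, S)) = wt q t a"
      proof -
        fix a assume a: "a \<in> P1 (Suc K)"
        obtain M S where [simp]: "a = (M,S)" by (cases a)
        have RM: "R \<in># M" using a by (auto simp: P1_def)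
        have "sum_mset (add_mset R (M - {#R#})) = R + sum_mset (M - {#R#})" by simp
        hence "sum_mset M = R + sum_mset (M - {#R#})" by (simp only: insert_DiffM[OF RM])
        thus "q ^ R * wt q t (case a of (M, S) \<Rightarrow> (M - {#R#}, S)) = wt q t a"
          by (simp add: wt_def power_add mult.left_commute)
      qed
    qed
    also have "\<dots> = q ^ R * (sum (wt q t) (P0 K) + sum (wt q t) (P1 K))"
    proof -
      have d: "P0 K \<inter> P1 K = {}" by (auto simp: P0_def P1_def)
      show ?thesis by (simp add: sum_distrib_left[symmetric] sum.union_disjoint[OF fin(1) fin(2) d])
    qed
    finally show ?thesis .
  qed
  have A: "Hn q t R K = Hn q t r K + (1 + t) * sum (wt q t) (P1 K)" for K
    using T[of K] E0[of K] E2[of K] by (simp add: Hn_def algebra_simps)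
  have "Hn q t R (Suc k) = Hn q t r (Suc k) + (1 + t) * (q ^ R * (Hn q t r k + sum (wt q t) (P1 k)))"
    using A[of "Suc k"] E1[of k] E0[of k] by (simp add: Hn_def)
  also have "\<dots> = Hn q t r (Suc k) + q ^ R * (Hn q t R k + t * Hn q t r k)"
    using A[of k] by (simp add: algebra_simps)
  finally show ?thesis by (simp add: R_def)
qed

lemma aux:
  fixes x g h f a b c d e q qr qk t :: "'a::comm_ring_1"
  assumes e1: "x = h + q*qr * (g + t * f)"
  and e2: "g = f + q*qr * (e + t * a)"
  and e3: "h = b + qr * (f + t * c)"
  and e4: "f = c + qr * (a + t * d)"
  and c1: "h = f + q*qk * (b + t * c)"
  and c2: "g = e + qk * (f + t * a)"
  and c3: "f = a + qk * (c + t * d)"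
  shows "x = g + q*qk * (h + t * f)"
proof -
  have 1: "x = (f + q*qk*(b + t*c)) + q*qr*((e + qk*(f + t*a)) + t*(a + qk*(c+t*d)))"
    using e1 c1 c2 c3 by (simp add: algebra_simps)
  have 2: "(f + q*qk*(b + t*c)) + q*qr*((e + qk*(f + t*a)) + t*(a + qk*(c+t*d)))
     = (f + q*qr*(e + t*a)) + q*qk*((b + qr*(f + t*c)) + t*(c + qr*(a+t*d)))"
    by (simp add: algebra_simps)
  have 3: "(f + q*qr*(e + t*a)) + q*qk*((b + qr*(f + t*c)) + t*(c + qr*(a+t*d))) = g + q*qk * (h + t * f)"
    using e2 e3 e4 by (simp add: algebra_simps)
  show ?thesis using 1 2 3 by simp
qed

lemma Hn_1: "Hn q t 1 (Suc k) = Hn q t 1 k + q ^ Suc k * (1 + t)"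
proof (induction k)
  case 0
  show ?case using Hn_rec1[of q t 0 0] by (simp add: Hn_0k Hn_r0)
next
  case (Suc k)
  have "Hn q t 1 (Suc (Suc k)) = 1 + q * (Hn q t 1 (Suc k) + t)"
    using Hn_rec1[of q t 0 "Suc k"] by (simp add: Hn_0k)
  moreover have "Hn q t 1 (Suc k) = 1 + q * (Hn q t 1 k + t)"
    using Hn_rec1[of q t 0 k] by (simp add: Hn_0k)
  ultimately show ?case using Suc.IH by (simp add: algebra_simps)
qed

lemma Hn_conj:
  "Hn q t (Suc r) (Suc k) = Hn q t (Suc r) k + q ^ Suc k * (Hn q t r (Suc k) + t * Hn q t r k)"
proof (induction r arbitrary: k)
  case 0
  show ?case using Hn_1[of q t k] by (simp add: Hn_0k)
next
  case (Suc r)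
  note outer = Suc.IH
  show ?case
  proof (induction k)
    case 0
    have a: "Hn q t (Suc (Suc r)) 1 = Hn q t (Suc r) 1 + q ^ Suc (Suc r) * (1 + t)"
      using Hn_rec1[of q t "Suc r" 0] by (simp add: Hn_r0)
    have b: "Hn q t (Suc r) 1 = 1 + q * (Hn q t r 1 + t)"
      using outer[of 0] by (simp add: Hn_r0)
    have c: "Hn q t (Suc r) 1 = Hn q t r 1 + q ^ Suc r * (1 + t)"
      using Hn_rec1[of q t r 0] by (simp add: Hn_r0)
    show ?case using a b c by (simp add: Hn_r0 algebra_simps)
  next
    case (Suc k)
    have e1: "Hn q t (Suc (Suc r)) (Suc (Suc k)) = Hn q t (Suc r) (Suc (Suc k)) + q ^ Suc (Suc r) * (Hn q t (Suc (Suc r)) (Suc k) + t * Hn q t (Suc r) (Suc k))"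
      by (rule Hn_rec1)
    have e2: "Hn q t (Suc (Suc r)) (Suc k) = Hn q t (Suc r) (Suc k) + q ^ Suc (Suc r) * (Hn q t (Suc (Suc r)) k + t * Hn q t (Suc r) k)"
      by (rule Hn_rec1)
    have e3: "Hn q t (Suc r) (Suc (Suc k)) = Hn q t r (Suc (Suc k)) + q ^ Suc r * (Hn q t (Suc r) (Suc k) + t * Hn q t r (Suc k))"
      by (rule Hn_rec1)
    have e4: "Hn q t (Suc r) (Suc k) = Hn q t r (Suc k) + q ^ Suc r * (Hn q t (Suc r) k + t * Hn q t r k)"
      by (rule Hn_rec1)
    have c1: "Hn q t (Suc r) (Suc (Suc k)) = Hn q t (Suc r) (Suc k) + q ^ Suc (Suc k) * (Hn q t r (Suc (Suc k)) + t * Hn q t r (Suc k))"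
      by (rule outer)
    have c2: "Hn q t (Suc (Suc r)) (Suc k) = Hn q t (Suc (Suc r)) k + q ^ Suc k * (Hn q t (Suc r) (Suc k) + t * Hn q t (Suc r) k)"
      by (rule Suc.IH)
    have c3: "Hn q t (Suc r) (Suc k) = Hn q t (Suc r) k + q ^ Suc k * (Hn q t r (Suc k) + t * Hn q t r k)"
      by (rule outer)
    show ?case using aux[OF e1[unfolded power_Suc[of q "Suc r"]] e2[unfolded power_Suc[of q "Suc r"]] e3 e4 c1[unfolded power_Suc[of q "Suc k"]] c2 c3] by (simp only: power_Suc)
  qed
qed

lemma ov_Hn: "ovgauss q t (int a) (int b) = (if b \<le> a then Hn q t (a - b) b else 0)"
proof -
  have e: "(\<lambda>(M, S). t ^ card S * q ^ sum_mset M) = wt q t"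
    by (auto simp: wt_def fun_eq_iff)
  show ?thesis by (auto simp: ovgauss_def Hn_def e nat_diff_distrib)
qed

lemma ov_neg: "a < 0 \<Longrightarrow> ovgauss q t a b = 0"
  by (auto simp: ovgauss_def)

lemma ov00: "ovgauss q t 0 0 = 1"
  using ov_Hn[of q t 0 0] by (simp add: Hn_0k)

lemma ov_m1: "ovgauss q t (int m - 1) (int k) = (if m = 0 then 0 else ovgauss q t (int (m - 1)) (int k))"
  by (cases m) (auto simp: ov_neg)

lemma ovz: "a < b \<Longrightarrow> ovgauss q t a b = 0"
  by (auto simp: ovgauss_def)

lemma ovdiag: "ovgauss q t (int n) (int n) = 1"
  by (subst ov_Hn) (simp add: Hn_0k)

lemma G_conj:
  "ovgauss q t (int (Suc m)) (int (Suc k)) = ovgauss q t (int m) (int k)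
     + q ^ Suc k * (ovgauss q t (int m) (int (Suc k)) + t * ovgauss q t (int m - 1) (int k))"
proof (cases "k < m")
  case True
  obtain r where r: "m = Suc (k + r)" using less_imp_Suc_add[OF True] by blast
  have h1: "ovgauss q t (int (Suc m)) (int (Suc k)) = Hn q t (Suc r) (Suc k)"
    by (subst ov_Hn) (simp add: r)
  have h2: "ovgauss q t (int m) (int k) = Hn q t (Suc r) k"
    by (subst ov_Hn) (simp add: r)
  have h3: "ovgauss q t (int m) (int (Suc k)) = Hn q t r (Suc k)"
    by (subst ov_Hn) (simp add: r)
  have e: "int m - 1 = int (k + r)" by (simp add: r)
  have h4: "ovgauss q t (int m - 1) (int k) = Hn q t r k"
    unfolding e by (subst ov_Hn) simp
  show ?thesis unfolding h1 h2 h3 h4 by (rule Hn_conj)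
next
  case False
  have z1: "ovgauss q t (int m) (int (Suc k)) = 0" using False by (intro ovz) simp
  have z2: "ovgauss q t (int m - 1) (int k) = 0" using False by (intro ovz) simp
  show ?thesis
  proof (cases "k = m")
    case True
    thus ?thesis unfolding z1 z2 by (simp only: True ovdiag) simp
  next
    case False
    with \<open>\<not> k < m\<close> have "m < k" by simp
    hence "ovgauss q t (int (Suc m)) (int (Suc k)) = 0" "ovgauss q t (int m) (int k) = 0"
      by (intro ovz; simp)+
    thus ?thesis unfolding z1 z2 by simp
  qed
qed

definition AA :: "'a::comm_ring_1 \<Rightarrow> 'a \<Rightarrow> nat \<Rightarrow> 'a \<Rightarrow> 'a" where
  "AA q t k w = (\<Prod>j<k. 1 + t * w * q ^ Suc j)"

definition BB :: "'a::comm_ring_1 \<Rightarrow> nat \<Rightarrow> nat \<Rightarrow> 'a \<Rightarrow> 'a" where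
  "BB q k m w = (\<Prod>j\<in>{Suc k..m}. 1 - w * q ^ j)"

lemma AA_Suc_shift: "AA q t (Suc k) w = (1 + t * w * q) * AA q t k (w * q)"
  unfolding AA_def prod.lessThan_Suc_shift by (simp add: algebra_simps)

lemma AA_Suc: "AA q t (Suc k) w = AA q t k w * (1 + t * w * q ^ Suc k)"
  unfolding AA_def by simp

lemma BB_shift: "BB q (Suc j) (Suc m) w = BB q j m (w * q)"
  unfolding BB_def prod.atLeast_Suc_atMost_Suc_shift by (simp add: algebra_simps comp_def)

lemma BB_Suc: "j \<le> m \<Longrightarrow> BB q j (Suc m) w = (1 - w * q ^ Suc j) * BB q j m (w * q)"
proof -
  assume "j \<le> m"
  hence "BB q j (Suc m) w = (1 - w * q ^ Suc j) * BB q (Suc j) (Suc m) w"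
    unfolding BB_def by (subst prod.atLeast_Suc_atMost) auto
  thus ?thesis by (simp add: BB_shift)
qed

lemma pow_aux1: fixes w q :: "'a::comm_semiring_1" shows "w ^ Suc j * q ^ ((Suc j)\<^sup>2) = w * q ^ Suc j * ((w * q) ^ j * q ^ (j\<^sup>2))"
proof -
  have e: "(Suc j)\<^sup>2 = j\<^sup>2 + j + Suc j" by (simp add: power2_eq_square)
  have "w ^ Suc j * q ^ ((Suc j)\<^sup>2) = w ^ Suc j * (q ^ (j\<^sup>2) * q ^ j * q ^ Suc j)"
    by (simp only: e power_add)
  thus ?thesis by (simp add: power_mult_distrib mult_ac)
qed

lemma main_poly:
  fixes q t :: "'a::comm_ring_1"
  shows "AA q t m w = (\<Sum>k\<le>m. w ^ k * q ^ (k\<^sup>2) * AA q t k w * BB q k m w *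
            (ovgauss q t (int m) (int k) + t * w * q ^ (2 * k + 1) * ovgauss q t (int m - 1) (int k)))"
proof (induction m arbitrary: w)
  case 0
  show ?case by (simp add: AA_def BB_def ov_neg ov00)
next
  case (Suc m)
  define w' where "w' = w * q"
  define c where "c j = w' ^ j * q ^ (j\<^sup>2) * AA q t j w' * BB q j m w'" for j
  define p where "p k = w ^ k * q ^ (k\<^sup>2) * AA q t k w * BB q k (Suc m) w" for k
  define u where "u j = ovgauss q t (int m) (int j)" for j
  define v where "v j = ovgauss q t (int m - 1) (int j)" for j
  define G where "G k = ovgauss q t (int (Suc m)) (int k)" for k
  have G': "ovgauss q t (int (Suc m) - 1) (int k) = u k" for k by (simp add: u_def)
  have f2: "p (Suc j) = (1 + t * w * q) * (w * q ^ Suc j) * c j" for j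
    unfolding p_def c_def w'_def AA_Suc_shift BB_shift pow_aux1 by (simp add: algebra_simps)
  have f3: "p j * (q ^ j * (1 + t * w * q ^ Suc j)) = (1 + t * w * q) * (1 - w * q ^ Suc j) * c j"
    if "j \<le> m" for j
  proof -
    have e1: "AA q t j w * (1 + t * w * q ^ Suc j) = (1 + t * w * q) * AA q t j w'"
      using AA_Suc[of q t j w] AA_Suc_shift[of q t j w] by (simp add: w'_def)
    have e2: "w ^ j * q ^ j = w' ^ j" by (simp add: w'_def power_mult_distrib)
    have "p j * (q ^ j * (1 + t * w * q ^ Suc j)) = (w ^ j * q ^ j) * q ^ (j\<^sup>2) * (AA q t j w * (1 + t * w * q ^ Suc j)) * BB q j (Suc m) w"
      by (simp add: p_def mult_ac)
    also have "\<dots> = w' ^ j * q ^ (j\<^sup>2) * ((1 + t * w * q) * AA q t j w') * ((1 - w * q ^ Suc j) * BB q j m w')"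
      by (simp only: e1 e2 BB_Suc[OF that] w'_def)
    also have "\<dots> = (1 + t * w * q) * (1 - w * q ^ Suc j) * c j"
      by (simp add: c_def mult_ac)
    finally show ?thesis .
  qed
  have g0: "G 0 = 1" "u 0 = 1" unfolding G_def u_def by (subst ov_Hn, simp add: Hn_r0)+
  have g1: "G (Suc j) = u j + q ^ Suc j * (u (Suc j) + t * v j)" for j
    unfolding G_def u_def v_def by (rule G_conj)
  have uz: "u (Suc m) = 0" unfolding u_def by (subst ov_Hn) simp
  have "(\<Sum>k\<le>Suc m. p k * (G k + t * w * q ^ (2 * k + 1) * u k))
      = (\<Sum>k\<le>Suc m. p k * (q ^ k * (1 + t * w * q ^ Suc k)) * u k)
        + (\<Sum>k\<le>Suc m. p k * (G k - q ^ k * u k))"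
  proof -
    have "p k * (G k + t * w * q ^ (2 * k + 1) * u k) = p k * (q ^ k * (1 + t * w * q ^ Suc k)) * u k
        + p k * (G k - q ^ k * u k)" for k
    proof -
      have "q ^ (2 * k + 1) = q ^ k * q ^ Suc k" by (simp only: mult_2 power_add power_Suc) (simp add: mult_ac)
      thus ?thesis by (simp add: algebra_simps)
    qed
    thus ?thesis by (simp add: sum.distrib[symmetric])
  qed
  also have "(\<Sum>k\<le>Suc m. p k * (q ^ k * (1 + t * w * q ^ Suc k)) * u k)
      = (\<Sum>k\<le>m. (1 + t * w * q) * (1 - w * q ^ Suc k) * c k * u k)"
    apply (simp only: sum.atMost_Suc uz mult_zero_right add_0_right)
    apply (rule sum.cong[OF refl])
    apply (simp del: power_Suc add: f3)
    done
  also have "(\<Sum>k\<le>Suc m. p k * (G k - q ^ k * u k))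
      = (\<Sum>k\<le>m. (1 + t * w * q) * (w * q ^ Suc k) * c k * (u k + q ^ Suc k * t * v k))"
    unfolding sum.atMost_Suc_shift by (simp add: g0 g1 f2 algebra_simps)
  also have "(\<Sum>k\<le>m. (1 + t * w * q) * (1 - w * q ^ Suc k) * c k * u k)
      + (\<Sum>k\<le>m. (1 + t * w * q) * (w * q ^ Suc k) * c k * (u k + q ^ Suc k * t * v k))
      = (1 + t * w * q) * (\<Sum>k\<le>m. c k * (u k + t * w' * q ^ (2 * k + 1) * v k))"
  proof -
    have "(1 + t * w * q) * (1 - w * q ^ Suc k) * c k * u k
          + (1 + t * w * q) * (w * q ^ Suc k) * c k * (u k + q ^ Suc k * t * v k)
        = (1 + t * w * q) * (c k * (u k + t * w' * q ^ (2 * k + 1) * v k))" for k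
    proof -
      have h: "q ^ (2 * k + 1) = q * q ^ k * q ^ k" by (simp only: mult_2 power_add power_Suc) (simp add: mult_ac)
      show ?thesis unfolding h w'_def by (simp add: algebra_simps)
    qed
    thus ?thesis by (simp add: sum.distrib[symmetric] sum_distrib_left)
  qed
  also have "(\<Sum>k\<le>m. c k * (u k + t * w' * q ^ (2 * k + 1) * v k)) = AA q t m w'"
    using Suc.IH[of w'] by (simp add: c_def u_def v_def mult.assoc)
  finally have "(\<Sum>k\<le>Suc m. p k * (G k + t * w * q ^ (2 * k + 1) * u k)) = AA q t (Suc m) w"
    by (simp add: AA_Suc_shift w'_def)
  thus ?case by (simp only: p_def G_def G')
qed

lemma fps_const_sum': "fps_const (sum f A) = (\<Sum>x\<in>A. fps_const (f x))"
  by (induction A rule: infinite_finite_induct) (auto simp flip: fps_const_add)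

lemma ov_const: "ovgauss (fps_const q) (fps_const t) a b = fps_const (ovgauss q t a b)"
proof -
  have e: "(\<lambda>(M,S). fps_const t ^ card S * fps_const q ^ sum_mset M) = (\<lambda>p. fps_const (case p of (M,S) \<Rightarrow> t ^ card S * q ^ sum_mset M))"
    by (auto simp: fun_eq_iff)
  show ?thesis by (simp only: ovgauss_def e fps_const_sum'[symmetric]) simp
qed

lemma cX_nth: fixes f :: "'a::comm_ring_1 fps" shows "fps_nth (fps_const c * fps_X * f) N = (if N = 0 then 0 else c * fps_nth f (N - 1))"
proof -
  have e: "fps_const c * fps_X * f = fps_const c * (fps_X * f)" by (rule mult.assoc)
  show ?thesis unfolding e by (cases N) simp_all
qed

definition CC :: "'a::comm_ring_1 \<Rightarrow> nat \<Rightarrow> 'a fps" where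
  "CC q j = (\<Prod>i<j. 1 - (fps_const q * fps_X) * fps_const q ^ i)"

lemma WQ: "(fps_const q * fps_X) * fps_const q ^ j = fps_const (q ^ Suc j) * (fps_X :: 'a::comm_ring_1 fps)"
  by (simp only: fps_const_power power_Suc fps_const_mult[symmetric] mult_ac)

lemma CC_Suc: "CC q (Suc j) = CC q j * (1 - fps_const (q ^ Suc j) * fps_X)"
  by (simp only: CC_def prod.lessThan_Suc WQ)

lemma CC_0: "fps_nth (CC q j) 0 = 1"
proof (induction j)
  case 0 show ?case by (simp add: CC_def)
next
  case (Suc j) thus ?case by (simp add: CC_Suc)
qed

lemma CC_split: "k \<le> m \<Longrightarrow> CC q (Suc m) = CC q (Suc k) * BB (fps_const q) k m (fps_const q * fps_X)"
proof -
  assume km: "k \<le> m"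
  define f where "f i = 1 - (fps_const q * fps_X) * fps_const q ^ i" for i
  have e: "{..<Suc m} = {..<Suc k} \<union> {Suc k..m}" using km by auto
  have "CC q (Suc m) = prod f ({..<Suc k} \<union> {Suc k..m})"
    unfolding CC_def f_def[symmetric] e ..
  also have "\<dots> = prod f {..<Suc k} * prod f {Suc k..m}"
    by (rule prod.union_disjoint) auto
  finally show ?thesis unfolding CC_def BB_def f_def .
qed

definition FF :: "'a::comm_ring_1 \<Rightarrow> 'a \<Rightarrow> nat \<Rightarrow> 'a fps" where
  "FF q t m = Abs_fps (\<lambda>N. Hn q t m N * q ^ N)"

lemma FF_rec: "(1 - fps_const (q ^ Suc (Suc m)) * fps_X) * FF q t (Suc m)
   = (1 + fps_const (t * q ^ Suc (Suc m)) * fps_X) * FF q t m"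
proof (rule fps_ext)
  fix N
  show "fps_nth ((1 - fps_const (q ^ Suc (Suc m)) * fps_X) * FF q t (Suc m)) N
     = fps_nth ((1 + fps_const (t * q ^ Suc (Suc m)) * fps_X) * FF q t m) N"
  proof (cases N)
    case 0
    thus ?thesis by (simp add: FF_def Hn_r0 algebra_simps)
  next
    case (Suc N')
    have r: "Hn q t (Suc m) (Suc N') = Hn q t m (Suc N') + q ^ Suc m * (Hn q t (Suc m) N' + t * Hn q t m N')"
      by (rule Hn_rec1)
    have "fps_nth ((1 - fps_const (q ^ Suc (Suc m)) * fps_X) * FF q t (Suc m)) N
        = Hn q t (Suc m) (Suc N') * q ^ Suc N' - q ^ Suc (Suc m) * (Hn q t (Suc m) N' * q ^ N')"
      unfolding ring_distribs by (simp add: Suc FF_def cX_nth)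
    also have "\<dots> = Hn q t m (Suc N') * q ^ Suc N' + t * q ^ Suc (Suc m) * (Hn q t m N' * q ^ N')"
      unfolding r by (simp add: algebra_simps)
    also have "\<dots> = fps_nth ((1 + fps_const (t * q ^ Suc (Suc m)) * fps_X) * FF q t m) N"
      unfolding ring_distribs by (simp add: Suc FF_def cX_nth)
    finally show ?thesis .
  qed
qed

lemma GF: "CC q (Suc m) * FF q t m = AA (fps_const q) (fps_const t) m (fps_const q * fps_X)"
proof (induction m)
  case 0
  have "(1 - fps_const q * fps_X) * FF q t 0 = 1"
  proof (rule fps_ext)
    fix N show "fps_nth ((1 - fps_const q * fps_X) * FF q t 0) N = fps_nth (1 :: 'a fps) N"
      unfolding ring_distribs by (cases N) (simp_all add: cX_nth FF_def Hn_0k)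
  qed
  thus ?case by (simp add: CC_def AA_def)
next
  case (Suc m)
  have c: "CC q (Suc (Suc m)) = CC q (Suc m) * (1 - fps_const (q ^ Suc (Suc m)) * fps_X)"
    by (rule CC_Suc)
  have "CC q (Suc (Suc m)) * FF q t (Suc m) = (1 + fps_const (t * q ^ Suc (Suc m)) * fps_X) * (CC q (Suc m) * FF q t m)"
    unfolding c using FF_rec[of q m t] by (simp add: mult_ac)
  also have "\<dots> = AA (fps_const q) (fps_const t) (Suc m) (fps_const q * fps_X)"
    unfolding Suc AA_Suc by (simp add: mult_ac)
  finally show ?case .
qed

lemma ring_aux1:
  fixes Qc Tc X :: "'b::comm_ring_1"
  shows "1 - (- (Tc * Qc ^ 2) * X) * Qc ^ j = 1 + Tc * (Qc * X) * Qc ^ Suc j"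
  by (simp add: algebra_simps power2_eq_square)

lemma ring_aux2:
  fixes Qc X :: "'b::comm_ring_1"
  shows "X ^ k * Qc ^ (k\<^sup>2 + k) = (Qc * X) ^ k * Qc ^ (k\<^sup>2)"
  by (simp add: power_add power_mult_distrib mult_ac)

lemma ring_aux3:
  fixes Qc Tc X :: "'b::comm_ring_1"
  shows "Tc * Qc ^ (2 * k + 2) * X = Tc * (Qc * X) * Qc ^ (2 * k + 1)"
proof -
  have "Qc ^ (2 * k + 2) = Qc * Qc ^ (2 * k + 1)" by simp
  thus ?thesis by (simp add: mult_ac)
qed

lemma qpoch_AA:
  "qpoch (- fps_const (t * q\<^sup>2) * fps_X) (fps_const q) k
     = AA (fps_const q) (fps_const t) k (fps_const q * fps_X)"
proof -
  have c: "fps_const (t * q\<^sup>2) = fps_const t * fps_const q ^ 2" by simp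
  show ?thesis unfolding qpoch_def AA_def c
    by (rule prod.cong[OF refl]) (rule ring_aux1)
qed

lemma div_cancel_fps:
  fixes a b :: "'a::field fps"
  assumes "fps_nth b 0 \<noteq> 0"
  shows "a / b * b = a"
proof -
  have "a / b = a * inverse b" using assms by (rule fps_divide_unit)
  thus ?thesis using inverse_mult_eq_1[OF assms] by (simp add: mult.assoc)
qed

theorem theorem1p2:
  fixes q t :: "'a::field" and n :: nat
  assumes "n \<ge> 1"
  shows "(\<lambda>k::nat. fps_X ^ k * fps_const (q ^ (k\<^sup>2 + k))
            * qpoch (- fps_const (t * q\<^sup>2) * fps_X) (fps_const q) k
            / qpoch (fps_const q * fps_X) (fps_const q) (k + 1)
            * (fps_const (ovgauss q t (int n - 1) (int k))
               + fps_const (t * q ^ (2 * k + 2)) * fps_X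
                 * fps_const (ovgauss q t (int n - 2) (int k))))
         sums Abs_fps (\<lambda>k. ovgauss q t (int n + int k - 1) (int k) * q ^ k)"
proof -
  obtain m where n: "n = Suc m" using assms by (cases n) auto
  define Q where "Q = (fps_const q :: 'a fps)"
  define Tc where "Tc = (fps_const t :: 'a fps)"
  define W where "W = Q * fps_X"
  define T where "T = (\<lambda>k::nat. fps_X ^ k * fps_const (q ^ (k\<^sup>2 + k))
                 * qpoch (- fps_const (t * q\<^sup>2) * fps_X) (fps_const q) k
                 / qpoch (fps_const q * fps_X) (fps_const q) (k + 1)
                 * (fps_const (ovgauss q t (int n - 1) (int k))
                    + fps_const (t * q ^ (2 * k + 2)) * fps_X
                      * fps_const (ovgauss q t (int n - 2) (int k))))"
  define E where "E k = fps_const (ovgauss q t (int m) (int k)) + Tc * W * Q ^ (2 * k + 1) * fps_const (ovgauss q t (int m - 1) (int k))" for k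
  have Tk: "T k = W ^ k * Q ^ (k\<^sup>2) * AA Q Tc k W / CC q (Suc k) * E k" for k
  proof -
    have g1: "ovgauss q t (int n - 1) (int k) = ovgauss q t (int m) (int k)" by (simp add: n)
    have g2: "ovgauss q t (int n - 2) (int k) = ovgauss q t (int m - 1) (int k)" by (simp add: n)
    have a: "fps_X ^ k * fps_const (q ^ (k\<^sup>2 + k)) = W ^ k * Q ^ (k\<^sup>2)"
      using ring_aux2[of fps_X k Q] unfolding W_def Q_def fps_const_power .
    have b: "fps_const (t * q ^ (2 * k + 2)) * fps_X = Tc * W * Q ^ (2 * k + 1)"
      using ring_aux3[of Tc Q k fps_X] unfolding W_def Q_def Tc_def fps_const_power fps_const_mult .
    have c: "qpoch (fps_const q * fps_X) (fps_const q) (k + 1) = CC q (Suc k)"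
      by (simp add: qpoch_def CC_def)
    have d: "qpoch (- fps_const (t * q\<^sup>2) * fps_X) (fps_const q) k = AA Q Tc k W"
      unfolding Q_def Tc_def W_def by (rule qpoch_AA)
    show ?thesis unfolding T_def g1 g2 a b c d E_def ..
  qed
  have T0: "T k = 0" if "m < k" for k
  proof -
    have "ovgauss q t (int m) (int k) = 0" "ovgauss q t (int m - 1) (int k) = 0"
      using that by (intro ovz; simp)+
    hence "E k = 0" by (simp add: E_def)
    thus ?thesis by (simp add: Tk)
  qed
  have sm: "T sums (\<Sum>k\<in>{..m}. T k)"
    by (rule sums_finite) (auto simp: T0)
  have rearr: "(c * b) * (y * e) = (y * c) * b * e" for c b y e :: "'a fps"
    by (simp only: mult_ac)
  have CT: "CC q (Suc m) * T k = W ^ k * Q ^ (k\<^sup>2) * AA Q Tc k W * BB Q k m W * E k" if km: "k \<le> m" for k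
  proof -
    have "CC q (Suc m) * T k = (CC q (Suc k) * BB Q k m W) * ((W ^ k * Q ^ (k\<^sup>2) * AA Q Tc k W / CC q (Suc k)) * E k)"
      unfolding Tk CC_split[OF km] Q_def W_def ..
    also have "\<dots> = ((W ^ k * Q ^ (k\<^sup>2) * AA Q Tc k W / CC q (Suc k)) * CC q (Suc k)) * BB Q k m W * E k"
      by (rule rearr)
    also have "\<dots> = W ^ k * Q ^ (k\<^sup>2) * AA Q Tc k W * BB Q k m W * E k"
    proof -
      have "W ^ k * Q ^ (k\<^sup>2) * AA Q Tc k W / CC q (Suc k) * CC q (Suc k) = W ^ k * Q ^ (k\<^sup>2) * AA Q Tc k W"
        by (rule div_cancel_fps) (simp add: CC_0)
      thus ?thesis by (simp only:)
    qed
    finally show ?thesis .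
  qed
  have mp: "AA Q Tc m W = (\<Sum>k\<le>m. W ^ k * Q ^ (k\<^sup>2) * AA Q Tc k W * BB Q k m W * E k)"
    using main_poly[of Q Tc m W] unfolding E_def Q_def Tc_def ov_const .
  have "CC q (Suc m) * (\<Sum>k\<in>{..m}. T k) = (\<Sum>k\<in>{..m}. CC q (Suc m) * T k)"
    by (rule sum_distrib_left)
  also have "\<dots> = AA Q Tc m W" unfolding mp by (rule sum.cong) (simp_all add: CT)
  also have "\<dots> = CC q (Suc m) * FF q t m" using GF[of q m t] unfolding Q_def Tc_def W_def by simp
  finally have eq: "CC q (Suc m) * (\<Sum>k\<in>{..m}. T k) = CC q (Suc m) * FF q t m" .
  have nz: "CC q (Suc m) \<noteq> 0"
  proof
    assume "CC q (Suc m) = 0"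
    hence "fps_nth (CC q (Suc m)) 0 = 0" by simp
    thus False using CC_0[of q "Suc m"] by simp
  qed
  have s: "(\<Sum>k\<in>{..m}. T k) = FF q t m" using eq nz by simp
  have ff: "FF q t m = Abs_fps (\<lambda>k. ovgauss q t (int n + int k - 1) (int k) * q ^ k)"
  proof (rule fps_ext)
    fix k
    have e1: "int n + int k - 1 = int (m + k)" by (simp add: n)
    have e2: "ovgauss q t (int (m + k)) (int k) = Hn q t m k" by (subst ov_Hn) simp
    show "fps_nth (FF q t m) k = fps_nth (Abs_fps (\<lambda>k. ovgauss q t (int n + int k - 1) (int k) * q ^ k)) k"
      unfolding FF_def fps_nth_Abs_fps e1 e2 ..
  qed
  have "T sums FF q t m" using sm s by simp
  thus ?thesis unfolding ff T_def .
qed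

end
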